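(* Let $\mathcal{A}_1$ and $\mathcal{A}_2$ be two NFAs over a finite alphabet $A$. Then $L(\mathcal{A}_1)$ and $L(\mathcal{A}_2)$ are not PT-separable if and only if there exists a factorization pattern $(\vec u,\vec B)$ such that both $\mathcal{A}_1$ and $\mathcal{A}_2$ admit a $(\vec u,\vec B)$-path.
   Context: Piecewise testable (PT) languages over $A$ are finite Boolean combinations of languages $A^*a_1A^*\cdots A^*a_nA^*$ ($a_i\in A$); $L_1,L_2$ are PT-separable if some PT language $L$ satisfies $L_1\subseteq L$ and $L\cap L_2=\varnothing$. For states $p,q$ of an NFA and $B\subseteq A$: $p\xrightarrow{\subseteq B}q$ denotes a path (possibly of length $0$) from $p$ to $q$ all of whose transitions are labeled by letters of $B$; $p\xrightarrow{=B}q$ denotes such a path in which moreover every letter of $B$ occurs at least once. A factorization pattern is a pair $(\vec u,\vec B)$ with $\vec u=(u_0,\dots,u_p)$, $u_i\in A^*$, and $\vec B=(B_1,\dots,B_p)$, each $B_i$ a nonempty subset of $A$ ($p\ge 0$). A $(\vec u,\vec B)$-path in an NFA is a path from an initial state to a final state of the form $s_0\xrightarrow{u_0}p_1\xrightarrow{\subseteq B_1}q_1\xrightarrow{=B_1}q_1\xrightarrow{\subseteq B_1}r_1\xrightarrow{u_1}p_2\xrightarrow{\subseteq B_2}q_2\xrightarrow{=B_2}q_2\xrightarrow{\subseteq B_2}r_2\xrightarrow{u_2}\cdots\xrightarrow{u_{p-1}}p_p\xrightarrow{\subseteq B_p}q_p\xrightarrow{=B_p}q_p\xrightarrow{\subseteq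 B_p}r_p\xrightarrow{u_p}f$, i.e. for each $i$ a $(=B_i)$-loop around some state $q_i$, reached and left by $(\subseteq B_i)$-paths. *)

theory Defs
  imports Main
begin

(* Alphabet: a finite type 'a (A = UNIV). Words: 'a list. *)

record ('s, 'a) nfa =
  states :: "'s set"
  init   :: "'s set"
  final  :: "'s set"
  trans  :: "('s \<times> 'a \<times> 's) set"

definition nfa_wf :: "('s, 'a) nfa \<Rightarrow> bool" where
  "nfa_wf M \<longleftrightarrow> finite (states M) \<and> init M \<subseteq> states M \<and> final M \<subseteq> states M
     \<and> (\<forall>(p, a, q) \<in> trans M. p \<in> states M \<and> q \<in> states M)"

inductive run :: "('s, 'a) nfa \<Rightarrow> 's \<Rightarrow> 'a list \<Rightarrow> 's \<Rightarrow> bool" for M where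
  run_nil: "run M p [] p"
| run_cons: "(p, a, r) \<in> trans M \<Longrightarrow> run M r w q \<Longrightarrow> run M p (a # w) q"

definition lang :: "('s, 'a) nfa \<Rightarrow> 'a list set" where
  "lang M = {w. \<exists>s \<in> init M. \<exists>f \<in> final M. run M s w f}"

fun pt_basic :: "'a list \<Rightarrow> 'a list set" where
  "pt_basic [] = UNIV"
| "pt_basic (a # as) = {x @ [a] @ y | x y. y \<in> pt_basic as}"

inductive PT :: "'a list set \<Rightarrow> bool" where
  PT_basic: "PT (pt_basic as)"
| PT_compl: "PT L \<Longrightarrow> PT (- L)"
| PT_union: "PT L \<Longrightarrow> PT K \<Longrightarrow> PT (L \<union> K)"
| PT_inter: "PT L \<Longrightarrow> PT K \<Longrightarrow> PT (L \<inter> K)"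

definition PT_separable :: "'a list set \<Rightarrow> 'a list set \<Rightarrow> bool" where
  "PT_separable L1 L2 \<longleftrightarrow> (\<exists>L. PT L \<and> L1 \<subseteq> L \<and> L \<inter> L2 = {})"

definition sub_path :: "('s, 'a) nfa \<Rightarrow> 's \<Rightarrow> 'a set \<Rightarrow> 's \<Rightarrow> bool" where
  "sub_path M p B q \<longleftrightarrow> (\<exists>w. set w \<subseteq> B \<and> run M p w q)"

definition eq_path :: "('s, 'a) nfa \<Rightarrow> 's \<Rightarrow> 'a set \<Rightarrow> 's \<Rightarrow> bool" where
  "eq_path M p B q \<longleftrightarrow> (\<exists>w. set w = B \<and> run M p w q)"

definition fact_pattern :: "'a list list \<Rightarrow> 'a set list \<Rightarrow> bool" where
  "fact_pattern us Bs \<longleftrightarrow> length us = length Bs + 1 \<and> (\<forall>B \<in> set Bs. B \<noteq> {})"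

fun pattern_path :: "('s, 'a) nfa \<Rightarrow> 's \<Rightarrow> 'a list list \<Rightarrow> 'a set list \<Rightarrow> bool" where
  "pattern_path M s [u] [] = (\<exists>f \<in> final M. run M s u f)"
| "pattern_path M s (u # us) (B # Bs) =
     (\<exists>p q r. run M s u p \<and> sub_path M p B q \<and> eq_path M q B q \<and> sub_path M q B r
              \<and> pattern_path M r us Bs)"
| "pattern_path M s _ _ = False"

definition admits_pattern_path :: "('s, 'a) nfa \<Rightarrow> 'a list list \<Rightarrow> 'a set list \<Rightarrow> bool" where
  "admits_pattern_path M us Bs \<longleftrightarrow> (\<exists>s \<in> init M. pattern_path M s us Bs)"

end

theory Submission imports Defs "HOL-Library.Sublist" begin

definition SS :: "nat \<Rightarrow> 'a list \<Rightarrow> 'a list set" where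
  "SS k w = {t. subseq t w \<and> length t \<le> k}"

lemma SS_mono: "SS n w1 = SS n w2 \<Longrightarrow> k \<le> n \<Longrightarrow> SS k w1 = SS k w2"
  unfolding SS_def set_eq_iff by (metis (mono_tags, lifting) le_trans mem_Collect_eq)

lemma SS_eqD: "SS n w1 = SS n w2 \<Longrightarrow> length t \<le> n \<Longrightarrow> subseq t w1 \<longleftrightarrow> subseq t w2"
  unfolding SS_def by (auto simp: set_eq_iff)

lemma SS_append:
  assumes "SS k a = SS k a'" "SS k b = SS k b'"
  shows "SS k (a@b) = SS k (a'@b')"
proof -
  have *: "subseq t (y@z)" if "SS k x = SS k y" "SS k u = SS k z" "subseq t (x@u)" "length t \<le> k"
    for t x y u z :: "'a list"
  proof -
    from that(3) obtain t1 t2 where t: "t = t1@t2" "subseq t1 x" "subseq t2 u"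
      by (auto elim: subseq_appendE)
    have "subseq t1 y" using SS_eqD[OF that(1), of t1] t that(4) by auto
    moreover have "subseq t2 z" using SS_eqD[OF that(2), of t2] t that(4) by auto
    ultimately show ?thesis using t by (simp add: list_emb_append_mono)
  qed
  show ?thesis unfolding SS_def using *[OF assms] *[OF assms[symmetric]] by blast
qed

lemma pt_basic_eq: "pt_basic as = {w. subseq as w}"
proof (induction as)
  case Nil then show ?case by simp
next
  case (Cons a as)
  show ?case
  proof (rule set_eqI, rule iffI)
    fix w assume "w \<in> pt_basic (a # as)"
    then obtain x y where "w = x @ [a] @ y" "subseq as y" using Cons by auto
    then show "w \<in> {w. subseq (a # as) w}" by (simp add: subseq_drop_many)
  next
    fix w assume "w \<in> {w. subseq (a # as) w}"
    then obtain us v vs where "w = us @ v # vs" "a = v" "subseq as vs"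
      using list_emb_ConsD[of "(=)" a as w] by auto
    then show "w \<in> pt_basic (a # as)" using Cons by auto
  qed
qed

lemma PT_invariant:
  assumes "PT L"
  shows "\<exists>n. \<forall>w w'. SS n w = SS n w' \<longrightarrow> (w \<in> L \<longleftrightarrow> w' \<in> L)"
  using assms
proof induction
  case (PT_basic as)
  show ?case
    by (rule exI[of _ "length as"]) (auto simp: pt_basic_eq dest: SS_eqD)
next
  case (PT_compl L)
  then show ?case by auto
next
  case (PT_union L K)
  then obtain n1 n2 where n1: "\<forall>w w'. SS n1 w = SS n1 w' \<longrightarrow> (w \<in> L \<longleftrightarrow> w' \<in> L)"
    and n2: "\<forall>w w'. SS n2 w = SS n2 w' \<longrightarrow> (w \<in> K \<longleftrightarrow> w' \<in> K)" by blast
  show ?case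
  proof (rule exI[of _ "max n1 n2"], intro allI impI)
    fix w w' :: "'a list" assume "SS (max n1 n2) w = SS (max n1 n2) w'"
    then have "SS n1 w = SS n1 w'" "SS n2 w = SS n2 w'" by (meson SS_mono max.cobounded1 max.cobounded2)+
    then show "w \<in> L \<union> K \<longleftrightarrow> w' \<in> L \<union> K" using n1 n2 by blast
  qed
next
  case (PT_inter L K)
  then obtain n1 n2 where n1: "\<forall>w w'. SS n1 w = SS n1 w' \<longrightarrow> (w \<in> L \<longleftrightarrow> w' \<in> L)"
    and n2: "\<forall>w w'. SS n2 w = SS n2 w' \<longrightarrow> (w \<in> K \<longleftrightarrow> w' \<in> K)" by blast
  show ?case
  proof (rule exI[of _ "max n1 n2"], intro allI impI)
    fix w w' :: "'a list" assume "SS (max n1 n2) w = SS (max n1 n2) w'"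
    then have "SS n1 w = SS n1 w'" "SS n2 w = SS n2 w'" by (meson SS_mono max.cobounded1 max.cobounded2)+
    then show "w \<in> L \<inter> K \<longleftrightarrow> w' \<in> L \<inter> K" using n1 n2 by blast
  qed
qed

lemma PT_UNIV: "PT UNIV"
  using PT_basic[of "[]"] by simp

lemma PT_empty: "PT {}"
  using PT_compl[OF PT_UNIV] by simp

lemma PT_Inter: "finite F \<Longrightarrow> (\<forall>L\<in>F. PT L) \<Longrightarrow> PT (\<Inter>F)"
  by (induction F rule: finite_induct) (auto intro: PT_UNIV PT_inter)

lemma PT_Union: "finite F \<Longrightarrow> (\<forall>L\<in>F. PT L) \<Longrightarrow> PT (\<Union>F)"
  by (induction F rule: finite_induct) (auto intro: PT_empty PT_union)

lemma finite_short: "finite {t :: 'a::finite list. length t \<le> n}"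
  using finite_lists_length_le[of "UNIV :: 'a set" n] by simp

lemma class_eq:
  fixes w0 :: "'a::finite list"
  shows "{w. SS n w = SS n w0} =
    \<Inter> ((\<lambda>s. if subseq s w0 then pt_basic s else - pt_basic s) ` {t. length t \<le> n})"
proof (rule set_eqI)
  fix w :: "'a list"
  have "SS n w = SS n w0 \<longleftrightarrow> (\<forall>s. length s \<le> n \<longrightarrow> (subseq s w \<longleftrightarrow> subseq s w0))"
    unfolding SS_def by blast
  also have "\<dots> \<longleftrightarrow> (\<forall>s\<in>{t. length t \<le> n}. w \<in> (if subseq s w0 then pt_basic s else - pt_basic s))"
    unfolding pt_basic_eq by auto
  finally show "w \<in> {w. SS n w = SS n w0} \<longleftrightarrow>
    w \<in> \<Inter> ((\<lambda>s. if subseq s w0 then pt_basic s else - pt_basic s) ` {t. length t \<le> n})"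
    by (simp only: INT_iff mem_Collect_eq)
qed

lemma PT_class:
  fixes w0 :: "'a::finite list"
  shows "PT {w. SS n w = SS n w0}"
  unfolding class_eq
  by (rule PT_Inter) (auto intro: finite_short PT_basic PT_compl)

lemma not_sep_SS:
  fixes L1 L2 :: "'a::finite list set"
  assumes "\<not> PT_separable L1 L2"
  shows "\<exists>w1\<in>L1. \<exists>w2\<in>L2. SS n w1 = SS n w2"
proof -
  define L where "L = \<Union> ((\<lambda>T. {w. SS n w = T}) ` (SS n ` L1))"
  have fin: "finite (SS n ` L1)"
  proof (rule finite_subset)
    show "SS n ` L1 \<subseteq> Pow {t :: 'a list. length t \<le> n}" by (auto simp: SS_def)
    show "finite (Pow {t :: 'a list. length t \<le> n})" using finite_short by blast
  qed
  have "PT L" unfolding L_def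
    by (rule PT_Union) (use fin PT_class in auto)
  moreover have "L1 \<subseteq> L" unfolding L_def by auto
  ultimately have "L \<inter> L2 \<noteq> {}" using assms unfolding PT_separable_def by blast
  then show ?thesis unfolding L_def by auto
qed

definition univ :: "nat \<Rightarrow> 'a set \<Rightarrow> 'a list \<Rightarrow> bool" where
  "univ k B v \<longleftrightarrow> set v = B \<and> (\<forall>t. set t \<subseteq> B \<longrightarrow> length t \<le> k \<longrightarrow> subseq t v)"

fun fits :: "nat \<Rightarrow> 'a list list \<Rightarrow> 'a set list \<Rightarrow> 'a list \<Rightarrow> bool" where
  "fits k [u] [] w = (w = u)"
| "fits k (u # us) (B # Bs) w = (\<exists>v w'. w = u @ v @ w' \<and> univ k B v \<and> fits k us Bs w')"
| "fits k _ _ w = False"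

lemma subseq_set: "subseq t v \<Longrightarrow> set t \<subseteq> set v"
  by (induction rule: list_emb.induct) auto

lemma univ_SS: "univ k B v \<Longrightarrow> SS k v = {t. set t \<subseteq> B \<and> length t \<le> k}"
  unfolding univ_def SS_def using subseq_set by blast

lemma fits_SS: "fits k us Bs w \<Longrightarrow> fits k us Bs w' \<Longrightarrow> SS k w = SS k w'"
proof (induction k us Bs w arbitrary: w' rule: fits.induct)
  case (1 k u w)
  then show ?case by simp
next
  case (2 k u us B Bs w)
  from "2.prems" obtain v x where w: "w = u @ v @ x" "univ k B v" "fits k us Bs x" by auto
  from "2.prems" obtain v' x' where w': "w' = u @ v' @ x'" "univ k B v'" "fits k us Bs x'" by auto
  have e1: "SS k x = SS k x'" using "2.IH"[OF w(3) w'(3)] by simp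
  have e2: "SS k v = SS k v'" using univ_SS[OF w(2)] univ_SS[OF w'(2)] by simp
  have "SS k (v @ x) = SS k (v' @ x')" by (rule SS_append[OF e2 e1])
  then have "SS k (u @ v @ x) = SS k (u @ v' @ x')" by (rule SS_append[OF refl])
  then show ?case using w(1) w'(1) by simp
qed auto

lemma fits_length: "fits k us Bs w \<Longrightarrow> length us = length Bs + 1"
  by (induction k us Bs w rule: fits.induct) auto

lemma run_Nil[simp]: "run M p [] q \<longleftrightarrow> p = q"
  by (subst run.simps) auto

lemma run_Cons[simp]: "run M p (a # w) q \<longleftrightarrow> (\<exists>r. (p, a, r) \<in> trans M \<and> run M r w q)"
  by (subst run.simps) auto

lemma run_append: "run M p (x @ y) q \<longleftrightarrow> (\<exists>r. run M p x r \<and> run M r y q)"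
  by (induction x arbitrary: p) auto

lemma run_pow: "run M q y q \<Longrightarrow> run M q (concat (replicate k y)) q"
  by (induction k) (auto simp: run_append)

lemma subseq_pow: "set t \<subseteq> set y \<Longrightarrow> length t \<le> k \<Longrightarrow> subseq t (concat (replicate k y))"
proof (induction t arbitrary: k)
  case Nil then show ?case by simp
next
  case (Cons a t)
  then obtain k' where k: "k = Suc k'" by (cases k) auto
  have "subseq [a] y" using Cons.prems by (simp add: subseq_singleton_left)
  moreover have "subseq t (concat (replicate k' y))" using Cons k by simp
  ultimately have "subseq ([a] @ t) (y @ concat (replicate k' y))"
    by (rule list_emb_append_mono)
  then show ?case using k by simp
qed

lemma pattern_path_fits:
  "pattern_path M s us Bs \<Longrightarrow> \<exists>w f. f \<in> final M \<and> run M s w f \<and> fits k us Bs w"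
proof (induction M s us Bs rule: pattern_path.induct)
  case (1 M s u)
  then show ?case by auto
next
  case (2 M s u us B Bs)
  from "2.prems" obtain p q r where
    pq: "run M s u p" "sub_path M p B q" "eq_path M q B q" "sub_path M q B r"
        "pattern_path M r us Bs" by auto
  from "2.IH"[OF pq(5)] obtain w' f where f: "f \<in> final M" "run M r w' f" "fits k us Bs w'"
    by blast
  from pq(2) obtain x where x: "set x \<subseteq> B" "run M p x q" unfolding sub_path_def by blast
  from pq(3) obtain y where y: "set y = B" "run M q y q" unfolding eq_path_def by blast
  from pq(4) obtain z where z: "set z \<subseteq> B" "run M q z r" unfolding sub_path_def by blast
  define v where "v = x @ concat (replicate (Suc k) y) @ z"
  have "run M q (concat (replicate (Suc k) y)) q" using run_pow[OF y(2)] by blast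
  then have "run M p v r" unfolding v_def using x z by (auto simp: run_append simp del: replicate_Suc)
  have "set v = B" unfolding v_def using x y z by auto
  moreover have "subseq t v" if "set t \<subseteq> B" "length t \<le> k" for t
  proof -
    have "subseq t (concat (replicate (Suc k) y))" using subseq_pow that y by auto
    then have "subseq t ((concat (replicate (Suc k) y)) @ z)" by (rule subseq_rev_drop_many)
    then show ?thesis unfolding v_def by (rule subseq_drop_many)
  qed
  ultimately have "univ k B v" unfolding univ_def by auto
  then have "fits k (u # us) (B # Bs) (u @ v @ w')" using f by auto
  moreover have "run M s (u @ v @ w') f" using pq(1) \<open>run M p v r\<close> f(2) by (auto simp: run_append)
  ultimately show ?case using f(1) by blast
qed auto

lemma easy_dir:
  fixes M1 :: "('s1, 'a::finite) nfa" and M2 :: "('s2, 'a) nfa"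
  assumes "admits_pattern_path M1 us Bs" "admits_pattern_path M2 us Bs"
  shows "\<not> PT_separable (lang M1) (lang M2)"
proof
  assume "PT_separable (lang M1) (lang M2)"
  then obtain L where L: "PT L" "lang M1 \<subseteq> L" "L \<inter> lang M2 = {}"
    unfolding PT_separable_def by blast
  obtain n where n: "\<forall>w w'. SS n w = SS n w' \<longrightarrow> (w \<in> L \<longleftrightarrow> w' \<in> L)"
    using PT_invariant[OF L(1)] by blast
  obtain s1 where s1: "s1 \<in> init M1" "pattern_path M1 s1 us Bs"
    using assms(1) unfolding admits_pattern_path_def by blast
  obtain s2 where s2: "s2 \<in> init M2" "pattern_path M2 s2 us Bs"
    using assms(2) unfolding admits_pattern_path_def by blast
  obtain w1 f1 where w1: "f1 \<in> final M1" "run M1 s1 w1 f1" "fits n us Bs w1"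
    using pattern_path_fits[OF s1(2)] by blast
  obtain w2 f2 where w2: "f2 \<in> final M2" "run M2 s2 w2 f2" "fits n us Bs w2"
    using pattern_path_fits[OF s2(2)] by blast
  have "w1 \<in> lang M1" using s1 w1 unfolding lang_def by blast
  moreover have "w2 \<in> lang M2" using s2 w2 unfolding lang_def by blast
  moreover have "SS n w1 = SS n w2" using fits_SS w1(3) w2(3) by blast
  ultimately show False using n L by blast
qed

section \<open>Absorption\<close>

definition absb :: "nat \<Rightarrow> 'a set \<Rightarrow> 'a list \<Rightarrow> bool" where
  "absb N B G \<longleftrightarrow> (\<forall>b\<in>B. \<forall>t. subseq t G \<longrightarrow> length t < N \<longrightarrow> subseq (b # t) G)"

lemma absb_mono: "absb N B G \<Longrightarrow> N' \<le> N \<Longrightarrow> absb N' B G"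
  unfolding absb_def by auto

lemma absb_prepend:
  "absb N B G \<Longrightarrow> set \<beta> \<subseteq> B \<Longrightarrow> subseq t G \<Longrightarrow> length t + length \<beta> \<le> N \<Longrightarrow> subseq (\<beta> @ t) G"
proof (induction \<beta>)
  case Nil then show ?case by simp
next
  case (Cons b \<beta>)
  then have "subseq (\<beta> @ t) G" by simp
  moreover have "length (\<beta> @ t) < N" using Cons.prems by simp
  ultimately show ?case using Cons.prems unfolding absb_def by simp
qed

lemma subseq_drop: "subseq (drop n xs) xs"
  by (rule suffix_imp_subseq) (rule suffix_drop)

lemma subseq_trans: "subseq xs ys \<Longrightarrow> subseq ys zs \<Longrightarrow> subseq xs zs"
  using subseq_order.order_trans by blast

abbreviation CA :: "'a::finite itself \<Rightarrow> nat" where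
  "CA _ \<equiv> card (UNIV :: 'a set)"

lemma card_le_CA: "card (B :: 'a::finite set) \<le> card (UNIV :: 'a set)"
  by (rule card_mono) auto

lemma absb_step:
  fixes G :: "'a::finite list"
  assumes "absb N B G" "card (UNIV :: 'a set) \<le> N"
  shows "\<exists>P G'. G = P @ G' \<and> B \<subseteq> set P \<and> absb (N - card (UNIV :: 'a set)) (set P) G'"
proof -
  let ?C = "card (UNIV :: 'a set)"
  obtain \<beta> where \<beta>: "set \<beta> = B" "distinct \<beta>"
    using finite_distinct_list[of B] by auto
  have lb: "length \<beta> \<le> ?C" using \<beta> distinct_card card_le_CA by metis
  have h\<beta>: "subseq (\<beta> @ t) G" if "subseq t G" "length t \<le> N - ?C" for t
    using absb_prepend[OF assms(1) _ that(1)] \<beta>(1) that(2) lb assms(2) by simp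
  have ex: "subseq \<beta> (take (length G) G)" using h\<beta>[of "[]"] by simp
  define i0 where "i0 = (LEAST i. subseq \<beta> (take i G))"
  have i0: "subseq \<beta> (take i0 G)" unfolding i0_def using ex by (rule LeastI)
  have key: "subseq t (drop i0 G)" if "subseq t G" "length t \<le> N - ?C" for t
  proof -
    from h\<beta>[OF that] obtain us vs where uv: "G = us @ vs" "subseq \<beta> us" "subseq t vs"
      using list_emb_appendD by blast
    have "us = take (length us) G" using uv(1) by simp
    then have "i0 \<le> length us" unfolding i0_def using uv(2) by (metis Least_le)
    then have "vs = drop (length us - i0) (drop i0 G)" using uv(1) by simp
    then show ?thesis using uv(3) subseq_drop subseq_trans by metis
  qed
  have "B \<subseteq> set (take i0 G)" using i0 \<beta>(1) subseq_set by blast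
  moreover have "absb (N - ?C) (set (take i0 G)) (drop i0 G)"
    unfolding absb_def
  proof (intro ballI allI impI)
    fix x t assume x: "x \<in> set (take i0 G)" and t: "subseq t (drop i0 G)" "length t < N - ?C"
    have "subseq ([x] @ t) (take i0 G @ drop i0 G)"
      using x t(1) by (intro list_emb_append_mono) (auto simp: subseq_singleton_left)
    then have "subseq (x # t) G" by simp
    then show "subseq (x # t) (drop i0 G)" using key t(2) by simp
  qed
  ultimately show ?thesis by (metis append_take_drop_id)
qed

lemma absb_inner:
  fixes G :: "'a::finite list"
  shows "absb N B G \<Longrightarrow> k * card (UNIV :: 'a set) \<le> N \<Longrightarrow>
   (\<exists>W G'. G = W @ G' \<and> set W \<subseteq> B \<and> (\<forall>t. set t \<subseteq> B \<longrightarrow> length t \<le> k \<longrightarrow> subseq t W)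
       \<and> absb (N - k * card (UNIV :: 'a set)) B G')
 \<or> (\<exists>W G'. G = W @ G' \<and> B \<subset> set W \<and> absb (N - k * card (UNIV :: 'a set)) (set W) G')"
proof (induction k)
  case 0
  have "G = [] @ G \<and> set [] \<subseteq> B \<and> (\<forall>t. set t \<subseteq> B \<longrightarrow> length t \<le> 0 \<longrightarrow> subseq t [])
       \<and> absb (N - 0 * card (UNIV :: 'a set)) B G" using 0 by simp
  then show ?case by blast
next
  case (Suc k)
  let ?C = "card (UNIV :: 'a set)"
  have le: "k * ?C \<le> N" using Suc.prems by simp
  from Suc.IH[OF Suc.prems(1) le] show ?case
  proof
    assume "\<exists>W G'. G = W @ G' \<and> set W \<subseteq> B \<and> (\<forall>t. set t \<subseteq> B \<longrightarrow> length t \<le> k \<longrightarrow> subseq t W)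
       \<and> absb (N - k * ?C) B G'"
    then obtain W G' where W: "G = W @ G'" "set W \<subseteq> B"
      "\<forall>t. set t \<subseteq> B \<longrightarrow> length t \<le> k \<longrightarrow> subseq t W" "absb (N - k * ?C) B G'" by blast
    have "?C \<le> N - k * ?C" using Suc.prems by simp
    from absb_step[OF W(4) this] obtain P G'' where
      P: "G' = P @ G''" "B \<subseteq> set P" "absb (N - k * ?C - ?C) (set P) G''" by blast
    have eqN: "N - k * ?C - ?C = N - Suc k * ?C" by simp
    show ?case
    proof (cases "set P \<subseteq> B")
      case True
      then have sP: "set P = B" using P(2) by blast
      have "subseq t (W @ P)" if "set t \<subseteq> B" "length t \<le> Suc k" for t
      proof (cases "t = []")
        case True then show ?thesis by simp
      next
        case False
        then have t: "t = butlast t @ [last t]" by simp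
        have "set (butlast t) \<subseteq> B" using that(1) by (meson in_set_butlastD subset_iff)
        moreover have "length (butlast t) \<le> k" using that(2) by simp
        ultimately have "subseq (butlast t) W" using W(3) by blast
        moreover have "subseq [last t] P" using that False sP
          by (simp add: subseq_singleton_left subset_iff)
        ultimately have "subseq (butlast t @ [last t]) (W @ P)" by (rule list_emb_append_mono)
        then show ?thesis using t by simp
      qed
      moreover have "G = (W @ P) @ G''" using W(1) P(1) by simp
      moreover have "set (W @ P) \<subseteq> B" using W(2) sP by simp
      moreover have "absb (N - Suc k * ?C) B G''" using P(3) sP eqN by simp
      ultimately show ?thesis by blast
    next
      case False
      then have "B \<subset> set (W @ P)" using P(2) W(2) by auto
      moreover have "set (W @ P) = set P" using P(2) W(2) by auto
      moreover have "G = (W @ P) @ G''" using W(1) P(1) by simp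
      moreover have "absb (N - Suc k * ?C) (set (W @ P)) G''" using P(3) eqN \<open>set (W @ P) = set P\<close> by simp
      ultimately show ?thesis by blast
    qed
  next
    assume "\<exists>W G'. G = W @ G' \<and> B \<subset> set W \<and> absb (N - k * ?C) (set W) G'"
    then obtain W G' where W: "G = W @ G'" "B \<subset> set W" "absb (N - k * ?C) (set W) G'" by blast
    have "absb (N - Suc k * ?C) (set W) G'" using absb_mono[OF W(3)] by simp
    then show ?case using W(1,2) by blast
  qed
qed

lemma univ_extend: "univ K C W \<Longrightarrow> set V \<subseteq> C \<Longrightarrow> univ K C (V @ W)"
  unfolding univ_def by (auto simp: subseq_drop_many)

lemma NA_gen:
  fixes G :: "'a::finite list"
  assumes "1 \<le> K"
  shows "absb N B G \<Longrightarrow> B \<noteq> {} \<Longrightarrow>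
    (card (UNIV :: 'a set) - card B + 1) * (K * card (UNIV :: 'a set)) \<le> N \<Longrightarrow>
    \<exists>W G'. G = W @ G' \<and> B \<subseteq> set W \<and> univ K (set W) W"
proof (induction "card (UNIV :: 'a set) - card B" arbitrary: B G N rule: less_induct)
  case less
  let ?C = "card (UNIV :: 'a set)"
  have kle: "K * ?C \<le> N" using less.prems(3) by (metis le_add2 mult_le_mono1 mult_1 le_trans add.commute)
  from absb_inner[OF less.prems(1) kle] show ?case
  proof
    assume "\<exists>W G'. G = W @ G' \<and> set W \<subseteq> B \<and> (\<forall>t. set t \<subseteq> B \<longrightarrow> length t \<le> K \<longrightarrow> subseq t W)
       \<and> absb (N - K * ?C) B G'"
    then obtain W G' where W: "G = W @ G'" "set W \<subseteq> B"
      "\<forall>t. set t \<subseteq> B \<longrightarrow> length t \<le> K \<longrightarrow> subseq t W" by blast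
    have "B \<subseteq> set W"
    proof
      fix b assume "b \<in> B"
      then have "subseq [b] W" using W(3) assms by auto
      then show "b \<in> set W" by (simp add: subseq_singleton_left)
    qed
    then have "set W = B" using W(2) by blast
    then have "univ K (set W) W" unfolding univ_def using W(3) by auto
    then show ?thesis using W(1) \<open>B \<subseteq> set W\<close> by blast
  next
    assume "\<exists>W G'. G = W @ G' \<and> B \<subset> set W \<and> absb (N - K * ?C) (set W) G'"
    then obtain W G' where W: "G = W @ G'" "B \<subset> set W" "absb (N - K * ?C) (set W) G'" by blast
    have cB: "card B < card (set W)" using W(2) by (simp add: psubset_card_mono)
    have cW: "card (set W) \<le> ?C" by (rule card_le_CA)
    have lt: "?C - card (set W) < ?C - card B" using cB cW by linarith
    have "(?C - card (set W) + 1) * (K * ?C) \<le> (?C - card B) * (K * ?C)"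
      using lt by (intro mult_le_mono1) linarith
    also have "\<dots> = (?C - card B + 1) * (K * ?C) - K * ?C" by (simp add: algebra_simps)
    also have "\<dots> \<le> N - K * ?C" using less.prems(3) by linarith
    finally have bud: "(?C - card (set W) + 1) * (K * ?C) \<le> N - K * ?C" .
    have "set W \<noteq> {}" using W(2) less.prems(2) by auto
    from less.hyps[OF lt W(3) this bud] obtain W2 G'' where
      W2: "G' = W2 @ G''" "set W \<subseteq> set W2" "univ K (set W2) W2" by blast
    have "univ K (set (W @ W2)) (W @ W2)"
      using univ_extend[OF W2(3), of W] W2(2) by (simp add: Un_absorb1)
    moreover have "G = (W @ W2) @ G''" using W(1) W2(1) by simp
    moreover have "B \<subseteq> set (W @ W2)" using W(2) by auto
    ultimately show ?thesis by blast
  qed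
qed

lemma NA:
  fixes G :: "'a::finite list"
  assumes "absb N B G" "B \<noteq> {}" "(card (UNIV :: 'a set) + 1) * (K * card (UNIV :: 'a set)) \<le> N" "1 \<le> K"
  shows "\<exists>W G'. G = W @ G' \<and> B \<subseteq> set W \<and> univ K (set W) W"
proof -
  have "(card (UNIV :: 'a set) - card B + 1) * (K * card (UNIV :: 'a set))
      \<le> (card (UNIV :: 'a set) + 1) * (K * card (UNIV :: 'a set))"
    by (intro mult_le_mono1) simp
  then show ?thesis using NA_gen[OF assms(4) assms(1,2) le_trans[OF _ assms(3)]] by blast
qed

section \<open>Peeling\<close>

lemma univ_extend2: "univ K C V \<Longrightarrow> set x \<subseteq> C \<Longrightarrow> univ K C (V @ x)"
  unfolding univ_def by (auto simp: subseq_rev_drop_many)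

lemma univ_mono: "univ k B v \<Longrightarrow> k' \<le> k \<Longrightarrow> univ k' B v"
  unfolding univ_def by auto

lemma fits_mono: "fits k us Bs w \<Longrightarrow> k' \<le> k \<Longrightarrow> fits k' us Bs w"
  by (induction k us Bs w rule: fits.induct) (auto intro: univ_mono)

lemma fits_prepend: "fits k us Bs w \<Longrightarrow> fits k ((x @ hd us) # tl us) Bs (x @ w)"
  by (induction k us Bs w rule: fits.induct) auto

lemma fits_block: "univ k B v \<Longrightarrow> fits k us Bs w \<Longrightarrow> fits k ([] # us) (B # Bs) (v @ w)"
  by (cases us) auto

lemma sub_tail:
  assumes "Y = V @ G" "set V \<subseteq> B" "G = [] \<or> hd G \<notin> B"
  shows "subseq t G \<longleftrightarrow> t = [] \<or> (\<exists>d. d \<notin> B \<and> subseq (d # t) Y) \<or> (t \<noteq> [] \<and> hd t \<notin> B \<and> subseq t Y)"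
proof
  assume t: "subseq t G"
  show "t = [] \<or> (\<exists>d. d \<notin> B \<and> subseq (d # t) Y) \<or> (t \<noteq> [] \<and> hd t \<notin> B \<and> subseq t Y)"
  proof (cases t)
    case Nil then show ?thesis by simp
  next
    case (Cons x t')
    then obtain c G' where G: "G = c # G'" using t by (cases G) auto
    then have c: "c \<notin> B" using assms(3) by simp
    show ?thesis
    proof (cases "x = c")
      case True
      then have "subseq t Y" using t assms(1) by (simp add: subseq_drop_many)
      then show ?thesis using Cons True c by simp
    next
      case False
      then have "subseq t G'" using t G Cons by simp
      then have "subseq (c # t) G" using G by simp
      then have "subseq (c # t) Y" using assms(1) by (simp add: subseq_drop_many)
      then show ?thesis using c by blast
    qed
  qed
next
  assume "t = [] \<or> (\<exists>d. d \<notin> B \<and> subseq (d # t) Y) \<or> (t \<noteq> [] \<and> hd t \<notin> B \<and> subseq t Y)"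
  then consider "t = []" | d where "d \<notin> B" "subseq (d # t) Y" | "t \<noteq> []" "hd t \<notin> B" "subseq t Y"
    by blast
  then show "subseq t G"
  proof cases
    case 1 then show ?thesis by simp
  next
    case 2
    from 2(2) assms(1) obtain xs1 xs2 where x: "d # t = xs1 @ xs2" "subseq xs1 V" "subseq xs2 G"
      by (auto elim: subseq_appendE)
    show ?thesis
    proof (cases xs1)
      case Nil
      then show ?thesis using x subseq_Cons' by auto
    next
      case (Cons y ys)
      then have "d \<in> set xs1" using x(1) by simp
      then have "d \<in> set V" using subseq_set[OF x(2)] by blast
      then show ?thesis using 2(1) assms(2) by blast
    qed
  next
    case 3
    from 3(3) assms(1) obtain xs1 xs2 where x: "t = xs1 @ xs2" "subseq xs1 V" "subseq xs2 G"
      by (auto elim: subseq_appendE)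
    show ?thesis
    proof (cases xs1)
      case Nil
      then show ?thesis using x by auto
    next
      case (Cons y ys)
      then have "hd t \<in> set xs1" using x(1) by simp
      then have "hd t \<in> set V" using subseq_set[OF x(2)] by blast
      then show ?thesis using 3(2) assms(2) by blast
    qed
  qed
qed

lemma SS_tail:
  assumes "SS (Suc M) Y1 = SS (Suc M) Y2"
    "Y1 = V1 @ G1" "set V1 \<subseteq> B" "G1 = [] \<or> hd G1 \<notin> B"
    "Y2 = V2 @ G2" "set V2 \<subseteq> B" "G2 = [] \<or> hd G2 \<notin> B"
  shows "SS M G1 = SS M G2"
proof -
  have "subseq t G1 \<longleftrightarrow> subseq t G2" if "length t \<le> M" for t
  proof -
    have e1: "subseq (d # t) Y1 \<longleftrightarrow> subseq (d # t) Y2" for d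
      using SS_eqD[OF assms(1), of "d # t"] that by simp
    have e2: "subseq t Y1 \<longleftrightarrow> subseq t Y2"
      using SS_eqD[OF assms(1), of t] that by simp
    show ?thesis
      unfolding sub_tail[OF assms(2,3,4)] sub_tail[OF assms(5,6,7)] e1 e2 ..
  qed
  then show ?thesis unfolding SS_def by blast
qed

lemma finite_SS: "finite (SS n (w :: 'a::finite list))"
  by (rule finite_subset[OF _ finite_short[of n]]) (auto simp: SS_def)

lemma peel:
  fixes Y1 Y2 :: "'a::finite list"
  assumes K: "card (UNIV::'a set) + 1 \<le> K"
  shows "SS m Y1 = SS m Y2 \<Longrightarrow>
    (card (UNIV :: 'a set) + 1) * (K * card (UNIV :: 'a set)) + K + 1
      + card (SS ((card (UNIV :: 'a set) + 1) * (K * card (UNIV :: 'a set))) Y1) \<le> m \<Longrightarrow>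
   \<exists>us Bs. fits K us Bs Y1 \<and> fits (K - card (UNIV::'a set)) us Bs Y2 \<and> (\<forall>B\<in>set Bs. B \<noteq> {})"
proof (induction "length Y1" arbitrary: Y1 Y2 m rule: less_induct)
  case less
  let ?C = "card (UNIV :: 'a set)"
  define N0 where "N0 = (?C + 1) * (K * ?C)"
  let ?K' = "K - ?C"
  have K1: "1 \<le> K" using K by simp
  have K'1: "1 \<le> ?K'" using K by simp
  have KK': "?K' + ?C = K" using K by simp
  have bud: "N0 + K + 1 + card (SS N0 Y1) \<le> m" using less.prems(2) unfolding N0_def by simp
  have SSeq: "SS m Y1 = SS m Y2" by fact
  have eqD: "subseq t Y1 \<longleftrightarrow> subseq t Y2" if "length t \<le> m" for t
    using SS_eqD[OF SSeq that] .
  show ?case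
  proof (cases Y1)
    case Nil
    have "Y2 = []"
    proof (rule ccontr)
      assume "Y2 \<noteq> []"
      then obtain x Z where "Y2 = x # Z" by (cases Y2) auto
      then have "subseq [x] Y2" by simp
      then have "subseq [x] Y1" using eqD[of "[x]"] bud by simp
      then show False using Nil by simp
    qed
    then have "fits K [[]] [] Y1 \<and> fits ?K' [[]] [] Y2 \<and> (\<forall>B\<in>set []. B \<noteq> {})"
      using Nil by simp
    then show ?thesis by blast
  next
    case (Cons d R1)
    let ?P = "\<lambda>i. 0 < i \<and> i \<le> length Y1 \<and> univ K (set (take i Y1)) (take i Y1)"
    show ?thesis
    proof (cases "\<exists>i. ?P i")
      case True
      define i where "i = (GREATEST i. ?P i)"
      have bnd: "\<And>y. ?P y \<Longrightarrow> y \<le> length Y1" by blast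
      obtain k0 where k0: "?P k0" using True by blast
      have Pi: "?P i" unfolding i_def by (rule GreatestI_nat[of ?P k0, OF k0 bnd])
      have imax: "j \<le> i" if "?P j" for j unfolding i_def by (rule Greatest_le_nat[of ?P j, OF that bnd])
      define V1 where "V1 = take i Y1"
      define G1 where "G1 = drop i Y1"
      define B where "B = set V1"
      have Y1: "Y1 = V1 @ G1" unfolding V1_def G1_def by simp
      have uV1: "univ K B V1" using Pi unfolding V1_def B_def by simp
      have V1ne: "V1 \<noteq> []" using Pi unfolding V1_def by auto
      have Bne: "B \<noteq> {}" using V1ne unfolding B_def by simp
      have hdG1: "G1 = [] \<or> hd G1 \<notin> B"
      proof (rule ccontr)
        assume "\<not> (G1 = [] \<or> hd G1 \<notin> B)"
        then have ne: "G1 \<noteq> []" and hB: "hd G1 \<in> B" by auto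
        have "take (Suc i) Y1 = V1 @ [hd G1]"
          using ne unfolding V1_def G1_def by (simp add: take_Suc_conv_app_nth hd_drop_conv_nth)
        moreover have "univ K B (V1 @ [hd G1])" using univ_extend2[OF uV1] hB by simp
        moreover have "set (V1 @ [hd G1]) = B" using hB unfolding B_def by auto
        moreover have "Suc i \<le> length Y1" using ne unfolding G1_def by simp
        ultimately have "?P (Suc i)" by simp
        then show False using imax by fastforce
      qed
      have nabs: "\<not> absb N0 B G1"
      proof
        assume "absb N0 B G1"
        from NA[OF this Bne _ K1] obtain W G' where
          W: "G1 = W @ G'" "B \<subseteq> set W" "univ K (set W) W" unfolding N0_def by blast
        have Wne: "W \<noteq> []" using W(2) Bne by auto
        have lV1: "length V1 = i" using Pi unfolding V1_def by simp
        have Y1': "Y1 = V1 @ W @ G'" using Y1 W(1) by simp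
        have tk: "take (i + length W) Y1 = V1 @ W" using lV1 by (subst Y1') simp
        have le: "i + length W \<le> length Y1" using lV1 by (subst Y1') simp
        have u: "univ K (set W) (V1 @ W)" using univ_extend[OF W(3)] W(2) unfolding B_def by blast
        have st: "set (V1 @ W) = set W" using W(2) unfolding B_def by auto
        have "?P (i + length W)"
        proof (intro conjI)
          show "0 < i + length W" using Pi by simp
          show "i + length W \<le> length Y1" by (rule le)
          show "univ K (set (take (i + length W) Y1)) (take (i + length W) Y1)"
            unfolding tk st by (rule u)
        qed
        from imax[OF this] Wne show False by simp
      qed
      define V2 where "V2 = takeWhile (\<lambda>x. x \<in> B) Y2"
      define G2 where "G2 = dropWhile (\<lambda>x. x \<in> B) Y2"
      have Y2: "Y2 = V2 @ G2" unfolding V2_def G2_def by simp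
      have sV2: "set V2 \<subseteq> B" unfolding V2_def by (auto dest: set_takeWhileD)
      have hdG2: "G2 = [] \<or> hd G2 \<notin> B" unfolding G2_def
        by (metis hd_dropWhile)
      have m1: "SS (Suc (m - 1)) Y1 = SS (Suc (m - 1)) Y2" using SSeq bud by simp
      have SSG: "SS (m - 1) G1 = SS (m - 1) G2"
        by (rule SS_tail[OF m1 Y1 _ hdG1 Y2 sV2 hdG2]) (simp add: B_def)
      have eqG: "subseq t G1 \<longleftrightarrow> subseq t G2" if "length t \<le> m - 1" for t
        using SS_eqD[OF SSG that] .
      obtain z where z: "set z = B" "distinct z" using finite_distinct_list[of B] by auto
      have lz: "length z \<le> ?C" using z distinct_card card_le_CA by metis
      have uV2: "univ ?K' B V2"
      proof (rule ccontr)
        assume nu: "\<not> univ ?K' B V2"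
        obtain t0 where t0: "set t0 \<subseteq> B" "length t0 \<le> ?K'" "\<not> subseq t0 V2"
        proof (cases "set V2 = B")
          case True
          then show ?thesis using nu that unfolding univ_def by blast
        next
          case False
          then obtain b where "b \<in> B" "b \<notin> set V2" using sV2 by blast
          then show ?thesis using that[of "[b]"] K'1 by (simp add: subseq_singleton_left)
        qed
        have "absb (m - K) B G2"
          unfolding absb_def
        proof (intro ballI allI impI)
          fix b g assume b: "b \<in> B" and g: "subseq g G2" "length g < m - K"
          have gG1: "subseq g G1" using eqG[of g] g by simp
          have "subseq (t0 @ z) V1" using uV1 t0 z lz KK' unfolding univ_def by simp
          then have "subseq ((t0 @ z) @ g) (V1 @ G1)" using gG1 by (rule list_emb_append_mono)
          then have "subseq (t0 @ z @ g) Y1" using Y1 by simp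
          moreover have "length (t0 @ z @ g) \<le> m" using t0 lz g KK' by simp
          ultimately have "subseq (t0 @ z @ g) (V2 @ G2)" using eqD Y2 by simp
          then obtain xs1 xs2 where x: "t0 @ z @ g = xs1 @ xs2" "subseq xs1 V2" "subseq xs2 G2"
            by (auto elim: subseq_appendE)
          have "length xs1 < length t0"
          proof (rule ccontr)
            assume "\<not> length xs1 < length t0"
            then have le: "length t0 \<le> length xs1" by simp
            have "t0 = take (length t0) (t0 @ z @ g)" by simp
            also have "\<dots> = take (length t0) (xs1 @ xs2)" using x(1) by simp
            also have "\<dots> = take (length t0) xs1" using le by simp
            finally have "prefix t0 xs1" by (metis take_is_prefix)
            then have "subseq t0 xs1" by (rule prefix_imp_subseq)
            then have "subseq t0 V2" using x(2) subseq_trans by blast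
            then show False using t0 by simp
          qed
          then have "xs2 = drop (length xs1) t0 @ z @ g"
          proof -
            assume lt: "length xs1 < length t0"
            have "xs2 = drop (length xs1) (xs1 @ xs2)" by simp
            also have "\<dots> = drop (length xs1) (t0 @ z @ g)" using x(1) by simp
            also have "\<dots> = drop (length xs1) t0 @ z @ g" using lt by simp
            finally show ?thesis .
          qed
          then have "subseq (z @ g) xs2" by (simp add: subseq_drop_many)
          moreover have "subseq (b # g) (z @ g)"
            using b z(1) list_emb_append_mono[of "(=)" "[b]" z g g]
            by (simp add: subseq_singleton_left)
          ultimately show "subseq (b # g) G2" using x(3) subseq_trans by blast
        qed
        then have "absb (m - K) B G1"
          unfolding absb_def
        proof (intro ballI allI impI)
          fix b t assume a: "\<forall>b\<in>B. \<forall>t. subseq t G2 \<longrightarrow> length t < m - K \<longrightarrow> subseq (b # t) G2"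
            and b: "b \<in> B" and t: "subseq t G1" "length t < m - K"
          have "subseq t G2" using eqG[of t] t by simp
          then have "subseq (b # t) G2" using a b t by blast
          moreover have "length (b # t) \<le> m - 1" using t(2) K1 by simp
          ultimately show "subseq (b # t) G1" using eqG[of "b # t"] by simp
        qed
        then have "absb N0 B G1" by (rule absb_mono) (use bud in simp)
        then show False using nabs by simp
      qed
      have prog: "card (SS N0 G1) < card (SS N0 Y1)"
      proof (rule psubset_card_mono[OF finite_SS])
        have sub: "SS N0 G1 \<subseteq> SS N0 Y1" unfolding SS_def using Y1 by (auto simp: subseq_drop_many)
        moreover have "SS N0 G1 \<noteq> SS N0 Y1"
        proof
          assume eq: "SS N0 G1 = SS N0 Y1"
          have "absb N0 B G1"
            unfolding absb_def
          proof (intro ballI allI impI)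
            fix b t assume b: "b \<in> B" and t: "subseq t G1" "length t < N0"
            have "subseq ([b] @ t) (V1 @ G1)"
              using b t(1) unfolding B_def by (intro list_emb_append_mono) (auto simp: subseq_singleton_left)
            then have "b # t \<in> SS N0 Y1" using Y1 t(2) unfolding SS_def by simp
            then have "b # t \<in> SS N0 G1" using eq by simp
            then show "subseq (b # t) G1" unfolding SS_def by simp
          qed
          then show False using nabs by simp
        qed
        ultimately show "SS N0 G1 \<subset> SS N0 Y1" by blast
      qed
      have lenG1: "length G1 < length Y1" using Y1 V1ne by simp
      have bud': "(?C + 1) * (K * ?C) + K + 1 + card (SS ((?C + 1) * (K * ?C)) G1) \<le> m - 1"
        using bud prog unfolding N0_def by simp
      from less.hyps[OF lenG1 SSG bud'] obtain us Bs where
        IH: "fits K us Bs G1" "fits ?K' us Bs G2" "\<forall>B\<in>set Bs. B \<noteq> {}" by blast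
      have "fits K ([] # us) (B # Bs) Y1" using fits_block[OF uV1 IH(1)] Y1 by simp
      moreover have "fits ?K' ([] # us) (B # Bs) Y2" using fits_block[OF uV2 IH(2)] Y2 by simp
      moreover have "\<forall>B'\<in>set (B # Bs). B' \<noteq> {}" using IH(3) Bne by simp
      ultimately show ?thesis by blast
    next
      case False
      have nabs: "\<not> absb N0 {d} R1"
      proof
        assume "absb N0 {d} R1"
        from NA[OF this _ _ K1] obtain W G' where
          W: "R1 = W @ G'" "d \<in> set W" "univ K (set W) W" unfolding N0_def by auto
        have "univ K (set W) ([d] @ W)" using univ_extend[OF W(3), of "[d]"] W(2) by simp
        moreover have "take (Suc (length W)) Y1 = d # W" using Cons W(1) by simp
        moreover have "set (d # W) = set W" using W(2) by auto
        moreover have "Suc (length W) \<le> length Y1" using Cons W(1) by simp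
        ultimately have "?P (Suc (length W))" by simp
        then show False using False by blast
      qed
      have "Y2 \<noteq> []"
      proof
        assume "Y2 = []"
        moreover have "subseq [d] Y1" using Cons by simp
        ultimately show False using eqD[of "[d]"] bud by simp
      qed
      then obtain e R2 where Y2: "Y2 = e # R2" by (cases Y2) auto
      have ed: "e = d"
      proof (rule ccontr)
        assume ne: "e \<noteq> d"
        have "absb (m - 1) {d} R1"
          unfolding absb_def
        proof (intro ballI allI impI)
          fix b t assume b: "b \<in> {d}" and t: "subseq t R1" "length t < m - 1"
          have "subseq (d # t) Y1" using Cons t by simp
          then have "subseq (d # t) Y2" using eqD[of "d # t"] t by simp
          then have "subseq (d # t) R2" using Y2 ne by (simp split: if_splits)
          then have "subseq (e # d # t) Y2" using Y2 by simp
          then have "subseq (e # d # t) Y1" using eqD[of "e # d # t"] t by simp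
          then have "subseq (e # d # t) R1" using Cons ne by (simp split: if_splits)
          then show "subseq (b # t) R1" using b subseq_Cons' by fastforce
        qed
        then have "absb N0 {d} R1" by (rule absb_mono) (use bud in simp)
        then show False using nabs by simp
      qed
      have SSR: "SS (m - 1) R1 = SS (m - 1) R2"
      proof -
        have "subseq t R1 \<longleftrightarrow> subseq t R2" if "length t \<le> m - 1" for t
        proof -
          have "subseq t R1 \<longleftrightarrow> subseq (d # t) Y1" using Cons by simp
          also have "\<dots> \<longleftrightarrow> subseq (d # t) Y2" using eqD[of "d # t"] that bud by simp
          also have "\<dots> \<longleftrightarrow> subseq t R2" using Y2 ed by simp
          finally show ?thesis .
        qed
        then show ?thesis unfolding SS_def by blast
      qed
      have prog: "card (SS N0 R1) < card (SS N0 Y1)"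
      proof (rule psubset_card_mono[OF finite_SS])
        have "SS N0 R1 \<subseteq> SS N0 Y1" unfolding SS_def using Cons by auto
        moreover have "SS N0 R1 \<noteq> SS N0 Y1"
        proof
          assume eq: "SS N0 R1 = SS N0 Y1"
          have "absb N0 {d} R1"
            unfolding absb_def
          proof (intro ballI allI impI)
            fix b t assume b: "b \<in> {d}" and t: "subseq t R1" "length t < N0"
            have "d # t \<in> SS N0 Y1" using Cons t unfolding SS_def by simp
            then have "d # t \<in> SS N0 R1" using eq by simp
            then show "subseq (b # t) R1" using b unfolding SS_def by simp
          qed
          then show False using nabs by simp
        qed
        ultimately show "SS N0 R1 \<subset> SS N0 Y1" by blast
      qed
      have lenR: "length R1 < length Y1" using Cons by simp
      have bud': "(?C + 1) * (K * ?C) + K + 1 + card (SS ((?C + 1) * (K * ?C)) R1) \<le> m - 1"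
        using bud prog unfolding N0_def by simp
      from less.hyps[OF lenR SSR bud'] obtain us Bs where
        IH: "fits K us Bs R1" "fits ?K' us Bs R2" "\<forall>B\<in>set Bs. B \<noteq> {}" by blast
      have "fits K (([d] @ hd us) # tl us) Bs ([d] @ R1)" by (rule fits_prepend[OF IH(1)])
      moreover have "fits ?K' (([d] @ hd us) # tl us) Bs ([d] @ R2)" by (rule fits_prepend[OF IH(2)])
      ultimately show ?thesis using Cons Y2 ed IH(3) by auto
    qed
  qed
qed

section \<open>Loops\<close>

lemma split_blocks:
  "subseq (concat (replicate n \<beta>)) v \<Longrightarrow>
   \<exists>xs rest. length xs = n \<and> v = concat xs @ rest \<and> (\<forall>x\<in>set xs. subseq \<beta> x)"
proof (induction n arbitrary: v)
  case 0
  then show ?case by (intro exI[of _ "[]"] exI[of _ v]) simp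
next
  case (Suc n)
  then have "subseq (\<beta> @ concat (replicate n \<beta>)) v" by simp
  then obtain us vs where uv: "v = us @ vs" "subseq \<beta> us" "subseq (concat (replicate n \<beta>)) vs"
    using list_emb_appendD by blast
  from Suc.IH[OF uv(3)] obtain xs rest where
    xs: "length xs = n" "vs = concat xs @ rest" "\<forall>x\<in>set xs. subseq \<beta> x" by blast
  have "length (us # xs) = Suc n" "v = concat (us # xs) @ rest" "\<forall>x\<in>set (us # xs). subseq \<beta> x"
    using xs uv by auto
  then show ?case by blast
qed

lemma run_states:
  "run M p (concat xs @ rest) q \<Longrightarrow>
   \<exists>f. f 0 = p \<and> (\<forall>i<length xs. run M (f i) (xs ! i) (f (Suc i))) \<and> run M (f (length xs)) rest q"
proof (induction xs arbitrary: p)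
  case Nil
  then show ?case by (intro exI[of _ "\<lambda>_. p"]) simp
next
  case (Cons x xs)
  then obtain r where r: "run M p x r" "run M r (concat xs @ rest) q" by (auto simp: run_append)
  from Cons.IH[OF r(2)] obtain f where
    f: "f 0 = r" "\<forall>i<length xs. run M (f i) (xs ! i) (f (Suc i))" "run M (f (length xs)) rest q"
    by blast
  define g where "g = (\<lambda>i. if i = 0 then p else f (i - 1))"
  have "g 0 = p" unfolding g_def by simp
  moreover have "\<forall>i<length (x # xs). run M (g i) ((x # xs) ! i) (g (Suc i))"
  proof (intro allI impI)
    fix i assume i: "i < length (x # xs)"
    show "run M (g i) ((x # xs) ! i) (g (Suc i))"
    proof (cases i)
      case 0 then show ?thesis using r(1) f(1) unfolding g_def by simp
    next
      case (Suc j) then show ?thesis using f(2) i unfolding g_def by simp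
    qed
  qed
  moreover have "run M (g (length (x # xs))) rest q" using f(3) unfolding g_def by simp
  ultimately show ?case by blast
qed

lemma run_segment:
  assumes "\<forall>i<length xs. run M (f i) (xs ! i) (f (Suc i))"
  shows "i \<le> j \<Longrightarrow> j \<le> length xs \<Longrightarrow> run M (f i) (concat (take (j - i) (drop i xs))) (f j)"
proof (induction j)
  case 0 then show ?case by simp
next
  case (Suc j)
  show ?case
  proof (cases "i = Suc j")
    case True then show ?thesis by simp
  next
    case False
    then have ij: "i \<le> j" using Suc.prems by simp
    have jl: "j < length xs" using Suc.prems by simp
    have "take (Suc j - i) (drop i xs) = take (j - i) (drop i xs) @ [xs ! j]"
    proof -
      have "Suc j - i = Suc (j - i)" using ij by simp
      moreover have "j - i < length (drop i xs)" using ij jl by simp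
      ultimately show ?thesis using ij by (simp add: take_Suc_conv_app_nth)
    qed
    moreover have "run M (f i) (concat (take (j - i) (drop i xs))) (f j)" using Suc.IH ij jl by simp
    moreover have "run M (f j) (xs ! j) (f (Suc j))" using assms jl by simp
    ultimately show ?thesis by (simp add: run_append, blast)
  qed
qed

lemma run_target_state: "nfa_wf M \<Longrightarrow> run M p w q \<Longrightarrow> w \<noteq> [] \<Longrightarrow> q \<in> states M"
proof (induction w arbitrary: p)
  case Nil then show ?case by simp
next
  case (Cons a w)
  then obtain r where r: "(p, a, r) \<in> trans M" "run M r w q" by auto
  show ?case
  proof (cases w)
    case Nil
    then have "q = r" using r by simp
    then show ?thesis using r(1) Cons.prems(1) unfolding nfa_wf_def by blast
  next
    case (Cons b w')
    then show ?thesis using Cons.IH[OF Cons.prems(1) r(2)] by simp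
  qed
qed

lemma loop_extract:
  fixes M :: "('s, 'a::finite) nfa"
  assumes wf: "nfa_wf M" and u: "univ k B v" and Bne: "B \<noteq> {}" and r: "run M p v q"
    and k: "card (UNIV :: 'a set) * (card (states M) + 2) \<le> k"
  shows "\<exists>q1. sub_path M p B q1 \<and> eq_path M q1 B q1 \<and> sub_path M q1 B q"
proof -
  let ?C = "card (UNIV :: 'a set)"
  let ?n = "card (states M) + 1"
  obtain \<beta> where \<beta>: "set \<beta> = B" "distinct \<beta>" using finite_distinct_list[of B] by auto
  have lb: "length \<beta> \<le> ?C" using \<beta> distinct_card card_le_CA by metis
  have "length (concat (replicate ?n \<beta>)) \<le> k"
  proof -
    have "length (concat (replicate ?n \<beta>)) = ?n * length \<beta>" by (simp add: length_concat sum_list_replicate)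
    also have "\<dots> \<le> ?n * ?C" by (rule mult_le_mono2[OF lb])
    also have "\<dots> \<le> ?C * (card (states M) + 2)" by simp
    finally show ?thesis using k by simp
  qed
  moreover have "set (concat (replicate ?n \<beta>)) \<subseteq> B" using \<beta> by auto
  ultimately have "subseq (concat (replicate ?n \<beta>)) v" using u unfolding univ_def by blast
  from split_blocks[OF this] obtain xs rest where
    xs: "length xs = ?n" "v = concat xs @ rest" "\<forall>x\<in>set xs. subseq \<beta> x" by blast
  have sv: "set v = B" using u unfolding univ_def by simp
  from run_states[of M p xs rest q] r xs(2) obtain f where
    f: "f 0 = p" "\<forall>i<length xs. run M (f i) (xs ! i) (f (Suc i))" "run M (f (length xs)) rest q"
    by blast
  have xsB: "B \<subseteq> set (xs ! i)" if "i < length xs" for i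
    using xs(3) that \<beta>(1) subseq_set nth_mem by metis
  have xsne: "xs ! i \<noteq> []" if "i < length xs" for i
    using xsB[OF that] Bne by auto
  have img: "f ` {0..?n} \<subseteq> insert p (states M)"
  proof
    fix y assume "y \<in> f ` {0..?n}"
    then obtain i where i: "i \<le> ?n" "y = f i" by auto
    show "y \<in> insert p (states M)"
    proof (cases i)
      case 0 then show ?thesis using i f(1) by simp
    next
      case (Suc j)
      then have "run M (f j) (xs ! j) (f i)" using f(2) i xs(1) by simp
      then have "f i \<in> states M" using run_target_state[OF wf] xsne[of j] Suc i xs(1) by simp
      then show ?thesis using i by simp
    qed
  qed
  have fin: "finite (states M)" using wf unfolding nfa_wf_def by simp
  have "\<not> inj_on f {0..?n}"
  proof
    assume "inj_on f {0..?n}"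
    then have "card {0..?n} \<le> card (insert p (states M))"
      using card_inj_on_le[OF _ img] fin by simp
    moreover have "card (insert p (states M)) \<le> card (states M) + 1"
      using fin by (simp add: card_insert_le_m1 card_insert_if)
    ultimately show False by simp
  qed
  then obtain i j where ij: "i \<in> {0..?n}" "j \<in> {0..?n}" "i \<noteq> j" "f i = f j"
    unfolding inj_on_def by blast
  obtain a b where ab: "a < b" "b \<le> ?n" "f a = f b"
  proof (cases "i < j")
    case True then show ?thesis using that[of i j] ij by auto
  next
    case False then show ?thesis using that[of j i] ij by auto
  qed
  have setcv: "set (concat xs) \<subseteq> B" using sv xs(2) by auto
  have sub1: "sub_path M p B (f a)"
  proof -
    have "run M (f 0) (concat (take (a - 0) (drop 0 xs))) (f a)"
      using run_segment[OF f(2), of 0 a] ab xs(1) by simp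
    then have "run M p (concat (take a xs)) (f a)" using f(1) by simp
    moreover have "set (concat (take a xs)) \<subseteq> B"
      using setcv set_take_subset by fastforce
    ultimately show ?thesis unfolding sub_path_def by blast
  qed
  have eq1: "eq_path M (f a) B (f a)"
  proof -
    let ?w = "concat (take (b - a) (drop a xs))"
    have "run M (f a) ?w (f b)" using run_segment[OF f(2), of a b] ab xs(1) by simp
    moreover have "set ?w \<subseteq> B"
    proof -
      have "set (take (b - a) (drop a xs)) \<subseteq> set xs"
        by (meson order_trans set_drop_subset set_take_subset)
      then show ?thesis using setcv by auto
    qed
    moreover have "B \<subseteq> set ?w"
    proof -
      have e0: "take (b - a) (drop a xs) ! 0 = xs ! a" using ab xs(1) by simp
      have "0 < length (take (b - a) (drop a xs))" using ab xs(1) by simp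
      then have "take (b - a) (drop a xs) ! 0 \<in> set (take (b - a) (drop a xs))" by (rule nth_mem)
      then have "xs ! a \<in> set (take (b - a) (drop a xs))" using e0 by simp
      then show ?thesis using xsB[of a] ab xs(1) by auto
    qed
    ultimately have "run M (f a) ?w (f a) \<and> set ?w = B" using ab(3) by auto
    then show ?thesis unfolding eq_path_def by blast
  qed
  have sub2: "sub_path M (f a) B q"
  proof -
    have "run M (f b) (concat (take (?n - b) (drop b xs))) (f ?n)"
      using run_segment[OF f(2), of b ?n] ab xs(1) by simp
    moreover have "take (?n - b) (drop b xs) = drop b xs" using xs(1) by simp
    ultimately have "run M (f b) (concat (drop b xs) @ rest) q" using f(3) xs(1)
      by (auto simp: run_append)
    moreover have "set (concat (drop b xs) @ rest) \<subseteq> B"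
      using sv xs(2) set_drop_subset by fastforce
    ultimately have "run M (f a) (concat (drop b xs) @ rest) q \<and> set (concat (drop b xs) @ rest) \<subseteq> B"
      using ab(3) by simp
    then show ?thesis unfolding sub_path_def by blast
  qed
  show ?thesis using sub1 eq1 sub2 by blast
qed

lemma fits_pattern:
  fixes M :: "('s, 'a::finite) nfa"
  assumes wf: "nfa_wf M"
  shows "fits k us Bs w \<Longrightarrow> (\<forall>B\<in>set Bs. B \<noteq> {}) \<Longrightarrow> run M s w f \<Longrightarrow> f \<in> final M
    \<Longrightarrow> card (UNIV :: 'a set) * (card (states M) + 2) \<le> k \<Longrightarrow> pattern_path M s us Bs"
proof (induction k us Bs w arbitrary: s rule: fits.induct)
  case (1 k u w)
  then show ?case by auto
next
  case (2 k u us B Bs w)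
  from "2.prems"(1) obtain v w' where vw: "w = u @ v @ w'" "univ k B v" "fits k us Bs w'" by auto
  from "2.prems"(3) vw(1) obtain p r where pr: "run M s u p" "run M p v r" "run M r w' f"
    by (auto simp: run_append)
  have Bne: "B \<noteq> {}" using "2.prems"(2) by simp
  from loop_extract[OF wf vw(2) Bne pr(2) "2.prems"(5)] obtain q where
    q: "sub_path M p B q" "eq_path M q B q" "sub_path M q B r" by blast
  have "pattern_path M r us Bs" using "2.IH"[OF vw(3) _ pr(3) "2.prems"(4) "2.prems"(5)] "2.prems"(2) by simp
  then show ?case using pr(1) q by auto
qed auto

lemma hard_dir:
  fixes M1 :: "('s1, 'a::finite) nfa" and M2 :: "('s2, 'a) nfa"
  assumes wf1: "nfa_wf M1" and wf2: "nfa_wf M2"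
    and ns: "\<not> PT_separable (lang M1) (lang M2)"
  shows "\<exists>us Bs. fact_pattern us Bs \<and> admits_pattern_path M1 us Bs \<and> admits_pattern_path M2 us Bs"
proof -
  let ?C = "card (UNIV :: 'a set)"
  define K where "K = ?C * (card (states M1) + card (states M2) + 2) + ?C + 1"
  define N0 where "N0 = (?C + 1) * (K * ?C)"
  define m where "m = N0 + K + 1 + card {t :: 'a list. length t \<le> N0}"
  have K: "?C + 1 \<le> K" unfolding K_def by simp
  obtain w1 w2 where w: "w1 \<in> lang M1" "w2 \<in> lang M2" "SS m w1 = SS m w2"
    using not_sep_SS[OF ns] by blast
  have "card (SS N0 w1) \<le> card {t :: 'a list. length t \<le> N0}"
    by (rule card_mono[OF finite_short]) (auto simp: SS_def)
  then have bud: "N0 + K + 1 + card (SS N0 w1) \<le> m" unfolding m_def by simp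
  obtain us Bs where ub: "fits K us Bs w1" "fits (K - ?C) us Bs w2" "\<forall>B\<in>set Bs. B \<noteq> {}"
    using peel[OF K w(3)] bud unfolding N0_def by blast
  have k1: "?C * (card (states M1) + 2) \<le> K - ?C" unfolding K_def
    by (simp add: algebra_simps)
  have k2: "?C * (card (states M2) + 2) \<le> K - ?C" unfolding K_def
    by (simp add: algebra_simps)
  have f1: "fits (K - ?C) us Bs w1" using fits_mono[OF ub(1)] by simp
  obtain s1 f1' where s1: "s1 \<in> init M1" "f1' \<in> final M1" "run M1 s1 w1 f1'"
    using w(1) unfolding lang_def by blast
  obtain s2 f2' where s2: "s2 \<in> init M2" "f2' \<in> final M2" "run M2 s2 w2 f2'"
    using w(2) unfolding lang_def by blast
  have "pattern_path M1 s1 us Bs" using fits_pattern[OF wf1 f1 ub(3) s1(3) s1(2) k1] .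
  then have a1: "admits_pattern_path M1 us Bs" using s1(1) unfolding admits_pattern_path_def by blast
  have "pattern_path M2 s2 us Bs" using fits_pattern[OF wf2 ub(2) ub(3) s2(3) s2(2) k2] .
  then have a2: "admits_pattern_path M2 us Bs" using s2(1) unfolding admits_pattern_path_def by blast
  have "fact_pattern us Bs" unfolding fact_pattern_def using fits_length[OF ub(1)] ub(3) by simp
  then show ?thesis using a1 a2 by blast
qed

theorem proposition2:
  fixes M1 :: "('s1, 'a::finite) nfa" and M2 :: "('s2, 'a) nfa"
  assumes "nfa_wf M1" and "nfa_wf M2"
  shows "\<not> PT_separable (lang M1) (lang M2) \<longleftrightarrow>
         (\<exists>us Bs. fact_pattern us Bs \<and> admits_pattern_path M1 us Bs \<and> admits_pattern_path M2 us Bs)"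
  using hard_dir[OF assms] easy_dir by blast

end
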